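(* Let $n\ge3$, $\mu\ge0$ and $\alpha\ge1$, and let $V(r,\varphi)$ be the Maxwell-ring potential in polar coordinates described in the context. Then $V_r(1,\pi/n)<0$.
   Context: Let $\zeta=2\pi/n$, $\phi_\alpha'(r)=-r^{-\alpha}$, $s=2^{-\alpha}\sum_{j=1}^{n-1}\sin^{-(\alpha-1)}(j\zeta/2)$. In polar coordinates $u=re^{i\varphi}$, the planar potential of a satellite attracted by $n$ unit masses at $e^{ij\zeta}$ and a central mass $\mu$ at $0$ (rescaled) is $$V(r,\varphi)=\frac{r^2}{2}+\frac{\mu}{s+\mu}\phi_\alpha(r)+\sum_{j=1}^n\frac1{s+\mu}\phi_\alpha\big(\|r-e^{i(j\zeta-\varphi)}\|\big),$$ so that $V_r(r,\varphi)=r-\frac{\mu}{s+\mu}r^{-\alpha}-\frac1{s+\mu}\sum_{j=1}^n\frac{r-\cos(j\zeta-\varphi)}{\|r-e^{i(j\zeta-\varphi)}\|^{\alpha+1}}$. *)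

theory Defs
  imports "HOL-Analysis.Analysis"
begin

text \<open>Potential phi_alpha with phi_alpha'(r) = - r^(-alpha) (additive constant fixed;
  it does not affect the radial derivative).\<close>
definition phi_alpha :: "real \<Rightarrow> real \<Rightarrow> real" where
  "phi_alpha \<alpha> r = (if \<alpha> = 1 then - ln r else r powr (1 - \<alpha>) / (\<alpha> - 1))"

definition zeta :: "nat \<Rightarrow> real" where
  "zeta n = 2 * pi / real n"

definition s_const :: "nat \<Rightarrow> real \<Rightarrow> real" where
  "s_const n \<alpha> = 2 powr (- \<alpha>) *
     (\<Sum>j=1..n-1. (sin (real j * zeta n / 2)) powr (- (\<alpha> - 1)))"

definition Vpot :: "nat \<Rightarrow> real \<Rightarrow> real \<Rightarrow> real \<Rightarrow> real \<Rightarrow> real" where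
  "Vpot n \<alpha> \<mu> r \<phi> = r^2 / 2 + \<mu> / (s_const n \<alpha> + \<mu>) * phi_alpha \<alpha> r
     + (\<Sum>j=1..n. 1 / (s_const n \<alpha> + \<mu>) *
          phi_alpha \<alpha> (norm (complex_of_real r - cis (real j * zeta n - \<phi>))))"

end

theory Submission
  imports Defs
begin

lemma phi_deriv:
  assumes "r > 0"
  shows "(phi_alpha \<alpha> has_real_derivative (- (r powr (-\<alpha>)))) (at r)"
proof (cases "\<alpha> = 1")
  case True
  have e: "phi_alpha \<alpha> = (\<lambda>r. - ln r)" using True by (auto simp: phi_alpha_def)
  have "((\<lambda>r. - ln r) has_real_derivative - inverse r) (at r)"
    by (intro DERIV_minus DERIV_ln assms)
  moreover have "inverse r = r powr (-\<alpha>)" using True assms by (simp add: powr_minus)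
  ultimately show ?thesis using e by simp
next
  case False
  have e: "phi_alpha \<alpha> = (\<lambda>r. r powr (1 - \<alpha>) / (\<alpha> - 1))" using False by (auto simp: phi_alpha_def)
  have "((\<lambda>r. r powr (1 - \<alpha>) / (\<alpha> - 1)) has_real_derivative ((1-\<alpha>) * r powr (1 - \<alpha> - 1)) / (\<alpha> - 1)) (at r)"
    by (intro DERIV_cdivide has_real_derivative_powr assms)
  moreover have "((1-\<alpha>) * r powr (1 - \<alpha> - 1)) / (\<alpha> - 1) = - (r powr (-\<alpha>))"
    using False by (simp add: field_simps)
  ultimately show ?thesis using e by simp
qed

lemma term_deriv:
  fixes a b x :: real
  assumes q: "(x - a)^2 + b^2 > 0"
  shows "((\<lambda>r. phi_alpha \<alpha> (sqrt ((r - a)^2 + b^2))) has_real_derivative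
     (- (sqrt ((x - a)^2 + b^2) powr (-\<alpha>))) * (inverse (sqrt ((x - a)^2 + b^2)) / 2 * (2 * (x - a)))) (at x)"
proof -
  have d1: "((\<lambda>r. (r - a)^2 + b^2) has_real_derivative 2 * (x - a)) (at x)"
    by (auto intro!: derivative_eq_intros)
  have d2: "((\<lambda>r. sqrt ((r - a)^2 + b^2)) has_real_derivative inverse (sqrt ((x - a)^2 + b^2)) / 2 * (2 * (x - a))) (at x)"
    using DERIV_chain2[OF DERIV_real_sqrt[OF q] d1] .
  show ?thesis using DERIV_chain2[OF phi_deriv d2] q by simp
qed

lemma telescope:
  fixes g :: "nat \<Rightarrow> real"
  assumes "n \<ge> 1"
  shows "(\<Sum>j=1..n-1. (g j + g (j+1))/2) = (\<Sum>j=1..n. g j) - (g 1 + g n)/2"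
  using assms
proof (induction n rule: dec_induct)
  case base then show ?case by simp
next
  case (step m)
  have A: "(\<Sum>j=1..Suc m - 1. (g j + g (j+1))/2) = (\<Sum>j=1..m-1. (g j + g (j+1))/2) + (g m + g (Suc m))/2"
    using step.hyps by (cases m) (auto)
  have B: "(\<Sum>j=1..m-1. (g j + g (j+1))/2) = (\<Sum>j=1..m. g j) - (g 1 + g m)/2" using step.IH by simp
  have C: "(\<Sum>j=1..Suc m. g j) = (\<Sum>j=1..m. g j) + g (Suc m)" by simp
  show ?case unfolding A B C by (simp add: field_simps)
qed

lemma sin_prod: "sin (x - h) * sin (x + h) = (sin x)^2 - (sin h)^2" for x h :: real
proof -
  have "sin (x - h) * sin (x + h) = (sin x * cos h)^2 - (cos x * sin h)^2"
    by (simp only: sin_add sin_diff power2_eq_square) (simp add: algebra_simps)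
  also have "... = (sin x)^2 * (1 - (sin h)^2) - (1 - (sin x)^2) * (sin h)^2"
    by (simp add: cos_squared_eq power_mult_distrib)
  also have "... = (sin x)^2 - (sin h)^2" by (simp add: algebra_simps)
  finally show ?thesis .
qed
  
lemma midpoint_ineq:
  fixes x h \<beta> :: real
  assumes "0 < x - h" "x + h < pi" "\<beta> \<ge> 0" "h \<ge> 0"
  shows "sin x powr (-\<beta>) \<le> (sin (x - h) powr (-\<beta>) + sin (x + h) powr (-\<beta>)) / 2"
proof -
  define a where "a = sin (x - h)"
  define b where "b = sin (x + h)"
  have a: "a > 0" unfolding a_def using assms by (intro sin_gt_zero) auto
  have b: "b > 0" unfolding b_def using assms by (intro sin_gt_zero) auto
  have sx: "sin x > 0" using assms by (intro sin_gt_zero) auto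
  have ab: "a * b \<le> sin x * sin x" unfolding a_def b_def sin_prod by (simp add: power2_eq_square)
  define p where "p = a powr (-\<beta>/2)"
  define q where "q = b powr (-\<beta>/2)"
  have pa: "a powr (-\<beta>) = p * p" unfolding p_def by (simp add: powr_add[symmetric])
  have qb: "b powr (-\<beta>) = q * q" unfolding q_def by (simp add: powr_add[symmetric])
  have pq: "p * q = (a*b) powr (-\<beta>/2)" unfolding p_def q_def using a b by (simp add: powr_mult)
  have "(sin x * sin x) powr (-\<beta>/2) \<le> (a*b) powr (-\<beta>/2)"
    using a b ab assms by (intro powr_mono2') auto
  moreover have "(sin x * sin x) powr (-\<beta>/2) = sin x powr (-\<beta>)"
    using sx by (simp add: powr_mult powr_add[symmetric])
  ultimately have "sin x powr (-\<beta>) \<le> p * q" using pq by simp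
  moreover have "2 * (p*q) \<le> p*p + q*q" using sum_squares_bound[of p q]
    by (simp add: power2_eq_square mult.assoc)
  ultimately show ?thesis using pa qb a_def b_def by simp
qed

lemma T_eval:
  fixes m :: real
  assumes sm: "sin m > 0"
  shows "(1 - cos (2*m))^2 + (sin (2*m))^2 = (2 * sin m)^2"
    and "- (sqrt ((1 - cos (2*m))^2 + (sin (2*m))^2) powr (-\<alpha>)) *
          (inverse (sqrt ((1 - cos (2*m))^2 + (sin (2*m))^2)) / 2 * (2 * (1 - cos (2*m))))
         = - (2 powr (-\<alpha>) * sin m powr (1 - \<alpha>))"
proof -
  have c: "(cos m)^2 = 1 - (sin m)^2" by (simp add: cos_squared_eq)
  show e: "(1 - cos (2*m))^2 + (sin (2*m))^2 = (2 * sin m)^2"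
  proof -
    have "(1 - cos (2*m))^2 + (sin (2*m))^2 = 4 * (sin m)^4 + 4 * (sin m)^2 * (cos m)^2"
      by (simp only: cos_double_sin sin_double) (simp add: algebra_simps eval_nat_numeral)
    also have "\<dots> = 4 * (sin m)^4 + 4 * (sin m)^2 * (1 - (sin m)^2)" unfolding c ..
    also have "\<dots> = (2 * sin m)^2" by (simp add: algebra_simps eval_nat_numeral)
    finally show ?thesis .
  qed
  have sq: "sqrt ((1 - cos (2*m))^2 + (sin (2*m))^2) = 2 * sin m" using e sm by (simp add: real_sqrt_mult)
  have "(2 * sin m) powr (-\<alpha>) * (inverse (2 * sin m) / 2 * (2 * (1 - cos (2*m))))
        = (2 * sin m) powr (-\<alpha>) * sin m"
    using sm unfolding cos_double_sin by (simp add: field_simps power2_eq_square)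
  also have "... = 2 powr (-\<alpha>) * (sin m powr (-\<alpha>) * sin m)"
    using sm by (simp add: powr_mult)
  also have "sin m powr (-\<alpha>) * sin m = sin m powr (1 - \<alpha>)"
  proof -
    have "sin m powr (1 + - \<alpha>) = sin m powr 1 * sin m powr (-\<alpha>)" by (rule powr_add)
    then show ?thesis using sm by simp
  qed
  finally show "- (sqrt ((1 - cos (2*m))^2 + (sin (2*m))^2) powr (-\<alpha>)) *
          (inverse (sqrt ((1 - cos (2*m))^2 + (sin (2*m))^2)) / 2 * (2 * (1 - cos (2*m))))
         = - (2 powr (-\<alpha>) * sin m powr (1 - \<alpha>))" unfolding sq by simp
qed

lemma norm_eq: "norm (complex_of_real r - cis t) = sqrt ((r - cos t)^2 + (sin t)^2)"
  by (simp add: cmod_def)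

lemma alg:
  fixes x y c S :: real
  assumes "x + y > 0"
  shows "1 + y/(x+y) * (- 1) + (- c / (x+y)) * S = (x - c * S) / (x+y)"
proof -
  have nz: "x + y \<noteq> 0" using assms by simp
  have "1 + y/(x+y) * (- 1) = x/(x+y)" using nz by (simp add: field_simps)
  then show ?thesis by (simp add: diff_divide_distrib)
qed

theorem mainTheorem8:
  fixes n :: nat and \<mu> \<alpha> :: real
  assumes "n \<ge> 3" and "\<mu> \<ge> 0" and "\<alpha> \<ge> 1"
  shows "\<exists>D. ((\<lambda>r. Vpot n \<alpha> \<mu> r (pi / real n)) has_real_derivative D) (at 1) \<and> D < 0"
proof -
  define s where "s = s_const n \<alpha>"
  define m where "m = (\<lambda>j::nat. (2 * real j - 1) * pi / (2 * real n))"
  define g where "g = (\<lambda>j. sin (m j) powr (1 - \<alpha>))"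
  define S where "S = (\<Sum>j=1..n. g j)"
  have n0: "real n > 0" using assms(1) by simp
  have mrange: "0 < m j \<and> m j < pi" if "1 \<le> j" "j \<le> n" for j
  proof
    have "2 * real j - 1 > 0" using that by simp
    then show "0 < m j" unfolding m_def using n0 by simp
    have "2 * real j - 1 < 2 * real n" using that by simp
    then have "(2 * real j - 1) * pi < (2 * real n) * pi" by (simp add: pi_gt_zero)
    then show "m j < pi" unfolding m_def using n0 by (simp add: divide_less_eq)
  qed
  have mpos: "sin (m j) > 0" if "1 \<le> j" "j \<le> n" for j
    using mrange[OF that] by (intro sin_gt_zero) auto
  have gpos: "g j > 0" if "1 \<le> j" "j \<le> n" for j
    unfolding g_def using mpos[OF that] by simp
  have theta: "real j * zeta n - pi / real n = 2 * m j" for j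
    unfolding zeta_def m_def using n0 by (simp add: field_simps)
  have sj: "sin (real j * pi / real n) > 0" if "1 \<le> j" "j \<le> n - 1" for j
  proof (rule sin_gt_zero)
    show "0 < real j * pi / real n" using that n0 by simp
    have "real j < real n" using that assms(1) by linarith
    then have "real j * pi < real n * pi" by (simp add: pi_gt_zero)
    then show "real j * pi / real n < pi" using n0 by (simp add: divide_less_eq)
  qed
  have s_eq: "s = 2 powr (-\<alpha>) * (\<Sum>j=1..n-1. sin (real j * pi / real n) powr (1 - \<alpha>))"
    unfolding s_def s_const_def zeta_def by simp
  have spos: "s > 0"
  proof -
    have "(\<Sum>j=1..n-1. sin (real j * pi / real n) powr (1 - \<alpha>)) > 0"
    proof (rule sum_pos)
      fix j assume "j \<in> {1..n-1}"
      then have "sin (real j * pi / real n) > 0" using sj by auto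
      then show "sin (real j * pi / real n) powr (1 - \<alpha>) > 0" by simp
    qed (use assms(1) in auto)
    then show ?thesis unfolding s_eq by simp
  qed
  have key: "(\<Sum>j=1..n-1. sin (real j * pi / real n) powr (1 - \<alpha>)) < S"
  proof -
    have "(\<Sum>j=1..n-1. sin (real j * pi / real n) powr (1 - \<alpha>)) \<le> (\<Sum>j=1..n-1. (g j + g (j+1))/2)"
    proof (rule sum_mono)
      fix j assume j: "j \<in> {1..n-1}"
      have e1: "real j * pi / real n - pi / (2 * real n) = m j"
        unfolding m_def using n0 by (simp add: field_simps)
      have e2: "real j * pi / real n + pi / (2 * real n) = m (j+1)"
        unfolding m_def using n0 by (simp add: field_simps)
      have r1: "0 < m j" using mrange[of j] j by auto
      have r2: "m (Suc j) < pi" using mrange[of "Suc j"] j by auto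
      have "sin (real j * pi / real n) powr (- (\<alpha> - 1)) \<le>
          (sin (real j * pi / real n - pi / (2 * real n)) powr (- (\<alpha> - 1)) +
           sin (real j * pi / real n + pi / (2 * real n)) powr (- (\<alpha> - 1))) / 2"
        by (rule midpoint_ineq) (simp_all add: e1 e2 r1 r2 assms(3) n0)
      then show "sin (real j * pi / real n) powr (1 - \<alpha>) \<le> (g j + g (j+1))/2"
        unfolding e1 e2 g_def by simp
    qed
    also have "\<dots> = S - (g 1 + g n)/2" unfolding S_def using assms(1) by (intro telescope) simp
    also have "\<dots> < S" using gpos[of 1] gpos[of n] assms(1) by simp
    finally show ?thesis .
  qed
  have V: "Vpot n \<alpha> \<mu> r (pi / real n) = r^2/2 + \<mu>/(s+\<mu>) * phi_alpha \<alpha> r +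
      (\<Sum>j=1..n. 1/(s+\<mu>) * phi_alpha \<alpha> (sqrt ((r - cos (2 * m j))^2 + (sin (2 * m j))^2)))" for r
    unfolding Vpot_def s_def norm_eq theta by (rule refl)
  define D where "D = 1 + \<mu>/(s+\<mu>) * (- (1 powr (-\<alpha>))) + (\<Sum>j=1..n. 1/(s+\<mu>) * (- (2 powr (-\<alpha>) * g j)))"
  have h1: "((\<lambda>r::real. r^2/2) has_real_derivative 1) (at 1)"
    by (auto intro!: derivative_eq_intros)
  have h2: "((\<lambda>r. \<mu>/(s+\<mu>) * phi_alpha \<alpha> r) has_real_derivative \<mu>/(s+\<mu>) * (- (1 powr (-\<alpha>)))) (at 1)"
    by (intro DERIV_cmult phi_deriv) simp
  have h3: "((\<lambda>r. \<Sum>j=1..n. 1/(s+\<mu>) * phi_alpha \<alpha> (sqrt ((r - cos (2 * m j))^2 + (sin (2 * m j))^2)))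
      has_real_derivative (\<Sum>j=1..n. 1/(s+\<mu>) * (- (2 powr (-\<alpha>) * g j)))) (at 1)"
  proof (rule DERIV_sum, rule DERIV_cmult)
    fix j assume "j \<in> {1..n}"
    then have sm: "sin (m j) > 0" using mpos by auto
    have pos: "0 < (1 - cos (2 * m j))^2 + (sin (2 * m j))^2"
      unfolding T_eval(1)[OF sm] using sm by simp
    show "((\<lambda>r. phi_alpha \<alpha> (sqrt ((r - cos (2 * m j))^2 + (sin (2 * m j))^2)))
        has_real_derivative (- (2 powr (-\<alpha>) * g j))) (at 1)"
      unfolding g_def by (rule term_deriv[OF pos, unfolded T_eval(2)[OF sm]])
  qed
  have dD: "((\<lambda>r. Vpot n \<alpha> \<mu> r (pi / real n)) has_real_derivative D) (at 1)"
    unfolding V D_def by (intro DERIV_add h1 h2 h3)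
  have sum_eq: "(\<Sum>j=1..n. 1/(s+\<mu>) * (- (2 powr (-\<alpha>) * g j))) = (- (2 powr (-\<alpha>)) / (s+\<mu>)) * S"
    unfolding S_def sum_distrib_left by (rule sum.cong) simp_all
  have sm0: "s + \<mu> > 0" using spos assms(2) by simp
  have "D = 1 + \<mu>/(s+\<mu>) * (- 1) + (- (2 powr (-\<alpha>)) / (s+\<mu>)) * S"
    unfolding D_def sum_eq by simp
  also have "\<dots> = (s - 2 powr (-\<alpha>) * S) / (s+\<mu>)"
    using sm0 by (rule alg)
  finally have "D = (s - 2 powr (-\<alpha>) * S) / (s+\<mu>)" .
  moreover have "s - 2 powr (-\<alpha>) * S < 0"
    unfolding s_eq using key by simp
  ultimately have "D < 0" using sm0 by (simp add: divide_neg_pos)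
  then show ?thesis using dD by blast
qed

end
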